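(* If nodes have no a priori knowledge, there is no distributed algorithm that decides if a configuration is feasible. That is, there is no DRIP $D$ together with a function $g$ mapping final histories to $\{\text{yes},\text{no}\}$ such that, for every configuration $G$, when all nodes of $G$ execute $D$: if $G$ is feasible then $g$ outputs "yes" at every node, and if $G$ is not feasible then $g$ outputs "no" at at least one node.
   Context: Model. A configuration is a finite simple undirected connected graph $G$ in which each node $v$ is tagged with a non-negative integer $t_v$ (wakeup tag). Nodes are anonymous and communicate in synchronous global rounds. A node $v$ wakes up in the first global round $r\le t_v$ in which it receives a message, if any, and otherwise in global round $t_v$; its local clock is $0$ in its wakeup round, it acts from local round $1$, and nodes do not know the global clock. In each round a node transmits a message to all neighbours, listens, or terminates. A listening node receives $M$ if exactly one neighbour transmits ($M$), hears collision noise (distinct from silence and messages) if at least two neighbours transmit, and silence otherwise; a transmitting node hears nothing. The history $\mathcal H_v[i]$ of $v$ in local round $i$ is $(\emptyset)$ (transmitted, silence, or spontaneous wakeup at $i=0$), $(M)$ (received $M$, or woken by $M$ at $i=0$), or $( * )$ (collision). A DRIP is a function $D$ from finite history vectors to $\{\mathit{listen},\mathit{transmit}(M),\mathit{terminate}\}$; each node $v$ in local round $i\ge1$ performs $D(\mathcal H_v[0\ldots i-1])$, and every node eventually terminates permanently (first at local round $done_v$); outputs are functions of $\mathcal H_v[0\ldots done_v]$. A decision function $f$ maps final histories to $\{0,1\}$; $(D,f)$ is a dedicated leader election algorithm for $G$ if, when all nodes of $G$ execute $D$, exactly one node gets output $1$; $G$ is feasible if such a pair exists. "No a priori knowledge"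 means the same DRIP and output function are used for all configurations. *)

theory Defs
  imports Main
begin

text \<open>Messages are natural numbers (encoding finite strings).\<close>

datatype entry = Sil | Msg nat | Coll
  \<comment> \<open>Sil: transmitted / silence / spontaneous wakeup (or terminated);
      Msg M: received M (or woken by M); Coll: collision noise\<close>

datatype action = Listen | Transmit nat | Terminate

type_synonym drip = "entry list \<Rightarrow> action"

text \<open>State of a node before/after a global round: None = still asleep,
  Some (history, terminated).\<close>
type_synonym state = "nat \<Rightarrow> (entry list \<times> bool) option"

definition config :: "nat set \<Rightarrow> (nat \<Rightarrow> nat \<Rightarrow> bool) \<Rightarrow> (nat \<Rightarrow> nat) \<Rightarrow> bool" where
  "config V E t \<longleftrightarrow> finite V \<and> V \<noteq> {} \<and>
     (\<forall>u v. E u v \<longrightarrow> u \<in> V \<and> v \<in> V) \<and>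
     (\<forall>u v. E u v \<longrightarrow> E v u) \<and> (\<forall>v. \<not> E v v) \<and>
     (\<forall>u\<in>V. \<forall>v\<in>V. E\<^sup>*\<^sup>* u v)"

definition transmits :: "drip \<Rightarrow> state \<Rightarrow> nat \<Rightarrow> nat option" where
  "transmits D s u = (case s u of
      Some (hs, False) \<Rightarrow> (case D hs of Transmit m \<Rightarrow> Some m | _ \<Rightarrow> None)
    | _ \<Rightarrow> None)"

definition reception :: "drip \<Rightarrow> nat set \<Rightarrow> (nat \<Rightarrow> nat \<Rightarrow> bool) \<Rightarrow> state \<Rightarrow> nat \<Rightarrow> entry" where
  "reception D V E s v = (let T = {u \<in> V. E v u \<and> transmits D s u \<noteq> None} in
     if T = {} then Sil
     else if card T = 1 then Msg (the (transmits D s (the_elem T)))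
     else Coll)"

definition step :: "drip \<Rightarrow> nat set \<Rightarrow> (nat \<Rightarrow> nat \<Rightarrow> bool) \<Rightarrow> (nat \<Rightarrow> nat) \<Rightarrow> nat
    \<Rightarrow> state \<Rightarrow> state" where
  "step D V E t r s v = (case s v of
      None \<Rightarrow> (case reception D V E s v of
                 Msg m \<Rightarrow> Some ([Msg m], False)
               | _ \<Rightarrow> (if r = t v then Some ([Sil], False) else None))
    | Some (hs, True) \<Rightarrow> Some (hs, True)
    | Some (hs, False) \<Rightarrow> (case D hs of
          Terminate \<Rightarrow> Some (hs @ [Sil], True)
        | Transmit m \<Rightarrow> Some (hs @ [Sil], False)
        | Listen \<Rightarrow> Some (hs @ [reception D V E s v], False)))"

text \<open>pre D V E t r = state before global round r.\<close>
primrec pre :: "drip \<Rightarrow> nat set \<Rightarrow> (nat \<Rightarrow> nat \<Rightarrow> bool) \<Rightarrow> (nat \<Rightarrow> nat) \<Rightarrow> nat \<Rightarrow> state" where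
  "pre D V E t 0 = (\<lambda>_. None)"
| "pre D V E t (Suc r) = step D V E t r (pre D V E t r)"

definition all_terminate :: "drip \<Rightarrow> nat set \<Rightarrow> (nat \<Rightarrow> nat \<Rightarrow> bool) \<Rightarrow> (nat \<Rightarrow> nat) \<Rightarrow> bool" where
  "all_terminate D V E t \<longleftrightarrow> (\<forall>v\<in>V. \<exists>r hs. pre D V E t r v = Some (hs, True))"

definition final_hist :: "drip \<Rightarrow> nat set \<Rightarrow> (nat \<Rightarrow> nat \<Rightarrow> bool) \<Rightarrow> (nat \<Rightarrow> nat) \<Rightarrow> nat \<Rightarrow> entry list" where
  "final_hist D V E t v = (SOME hs. \<exists>r. pre D V E t r v = Some (hs, True))"

definition leader_election :: "drip \<Rightarrow> (entry list \<Rightarrow> bool) \<Rightarrow> nat set \<Rightarrow> (nat \<Rightarrow> nat \<Rightarrow> bool)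
    \<Rightarrow> (nat \<Rightarrow> nat) \<Rightarrow> bool" where
  "leader_election D f V E t \<longleftrightarrow> all_terminate D V E t \<and>
     card {v \<in> V. f (final_hist D V E t v)} = 1"

definition feasible :: "nat set \<Rightarrow> (nat \<Rightarrow> nat \<Rightarrow> bool) \<Rightarrow> (nat \<Rightarrow> nat) \<Rightarrow> bool" where
  "feasible V E t \<longleftrightarrow> (\<exists>D f. leader_election D f V E t)"

end

theory Submission
  imports Defs
begin

definition E1 :: "nat \<Rightarrow> nat \<Rightarrow> bool" where "E1 u v = False"
definition E2 :: "nat \<Rightarrow> nat \<Rightarrow> bool" where "E2 u v = ((u = 0 \<and> v = 1) \<or> (u = 1 \<and> v = 0))"
definition t0 :: "nat \<Rightarrow> nat" where "t0 v = 0"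

lemma rec1: "reception D {0} E1 s 0 = Sil"
  by (simp add: reception_def E1_def)

lemma rec20: "transmits D s 1 = None \<Longrightarrow> reception D {0,1} E2 s 0 = Sil"
proof -
  assume a: "transmits D s 1 = None"
  have "{u \<in> {0,1}. E2 0 u \<and> transmits D s u \<noteq> None} = {}"
    using a by (auto simp: E2_def)
  then show ?thesis by (simp add: reception_def)
qed

lemma rec21: "transmits D s 0 = None \<Longrightarrow> reception D {0,1} E2 s 1 = Sil"
proof -
  assume a: "transmits D s 0 = None"
  have "{u \<in> {0,1}. E2 1 u \<and> transmits D s u \<noteq> None} = {}"
    using a by (auto simp: E2_def)
  then show ?thesis by (simp add: reception_def)
qed

lemma step_eq:
  assumes "s 0 = s 1" "s' 0 = s 0"
  shows "step D {0,1} E2 t0 r s 0 = step D {0} E1 t0 r s' 0 \<and>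
    step D {0,1} E2 t0 r s 1 = step D {0} E1 t0 r s' 0"
proof (cases "s 0")
  case None
  then have "transmits D s 1 = None" "transmits D s 0 = None"
    using assms(1) by (simp_all add: transmits_def)
  then show ?thesis using None assms rec20[of D s] rec21[of D s] rec1[of D s']
    by (simp add: step_def t0_def)
next
  case (Some p)
  obtain hs b where p: "p = (hs, b)" by (cases p)
  show ?thesis
  proof (cases b)
    case True
    then show ?thesis using Some p assms by (simp add: step_def t0_def)
  next
    case False
    show ?thesis
    proof (cases "D hs")
      case Listen
      have h: "s 1 = Some (hs, False)" "s 0 = Some (hs, False)" using assms(1) Some p False by simp_all
      have "transmits D s 1 = None" "transmits D s 0 = None"
        using Listen h by (simp_all add: transmits_def)
      then show ?thesis using Listen Some p False assms rec20[of D s] rec21[of D s] rec1[of D s']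
        by (simp add: step_def t0_def)
    next
      case (Transmit m)
      then show ?thesis using Some p False assms by (simp add: step_def t0_def)
    next
      case Terminate
      then show ?thesis using Some p False assms by (simp add: step_def t0_def)
    qed
  qed
qed

lemma pre_eq: "pre D {0,1} E2 t0 r 0 = pre D {0} E1 t0 r 0 \<and> pre D {0,1} E2 t0 r 1 = pre D {0} E1 t0 r 0"
proof (induction r)
  case 0
  then show ?case by simp
next
  case (Suc r)
  have "pre D {0,1} E2 t0 r 0 = pre D {0,1} E2 t0 r 1"
    "pre D {0} E1 t0 r 0 = pre D {0,1} E2 t0 r 0" using Suc.IH by simp_all
  from step_eq[of "pre D {0,1} E2 t0 r" "pre D {0} E1 t0 r" D r, OF this] show ?case by (simp only: pre.simps)
qed

lemma fh_eq: "final_hist D {0,1} E2 t0 0 = final_hist D {0} E1 t0 0"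
  "final_hist D {0,1} E2 t0 1 = final_hist D {0} E1 t0 0"
  unfolding final_hist_def using pre_eq[of D] by simp_all

lemma config1: "config {0} E1 t0"
  by (simp add: config_def E1_def)

lemma config2: "config {0,1} E2 t0"
proof -
  have "E2 0 1" "E2 1 0" by (simp_all add: E2_def)
  then have "E2\<^sup>*\<^sup>* 0 1" "E2\<^sup>*\<^sup>* 1 0" by auto
  then show ?thesis by (auto simp: config_def E2_def)
qed

lemma feas1: "feasible {0} E1 t0"
proof -
  let ?D = "\<lambda>_::entry list. Terminate"
  have "pre ?D {0} E1 t0 2 0 = Some ([Sil, Sil], True)"
    by (simp add: numeral_2_eq_2 step_def t0_def rec1)
  then have "all_terminate ?D {0} E1 t0" unfolding all_terminate_def by blast
  then have "leader_election ?D (\<lambda>_. True) {0} E1 t0" unfolding leader_election_def by simp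
  then show ?thesis unfolding feasible_def by blast
qed

lemma two_set: "{v \<in> {0::nat,1}. P v} = (if P 0 then {0} else {}) \<union> (if P 1 then {1} else {})"
  apply (rule set_eqI)
  apply (simp only: mem_Collect_eq insert_iff empty_iff Un_iff)
  by (metis empty_iff insert_iff)

lemma infeas2: "\<not> feasible {0,1} E2 t0"
proof
  assume "feasible {0,1} E2 t0"
  then obtain D f where c: "card {v \<in> {0::nat,1}. f (final_hist D {0,1} E2 t0 v)} = 1"
    unfolding feasible_def leader_election_def by blast
  have "{v \<in> {0::nat,1}. f (final_hist D {0,1} E2 t0 v)} =
     (if f (final_hist D {0} E1 t0 0) then {0} else {}) \<union> (if f (final_hist D {0} E1 t0 0) then {1} else {})"
    unfolding two_set fh_eq by (rule refl)
  with c show False by (simp split: if_splits)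
qed

theorem proposition5:
  shows "\<not> (\<exists>(D :: drip) (g :: entry list \<Rightarrow> bool).
            \<forall>V E t. config V E t \<longrightarrow>
              all_terminate D V E t \<and>
              (feasible V E t \<longrightarrow> (\<forall>v\<in>V. g (final_hist D V E t v))) \<and>
              (\<not> feasible V E t \<longrightarrow> (\<exists>v\<in>V. \<not> g (final_hist D V E t v))))"
proof
  assume "\<exists>(D :: drip) (g :: entry list \<Rightarrow> bool).
            \<forall>V E t. config V E t \<longrightarrow>
              all_terminate D V E t \<and>
              (feasible V E t \<longrightarrow> (\<forall>v\<in>V. g (final_hist D V E t v))) \<and>
              (\<not> feasible V E t \<longrightarrow> (\<exists>v\<in>V. \<not> g (final_hist D V E t v)))"
  then obtain D g where H: "\<forall>V E t. config V E t \<longrightarrow>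
              all_terminate D V E t \<and>
              (feasible V E t \<longrightarrow> (\<forall>v\<in>V. g (final_hist D V E t v))) \<and>
              (\<not> feasible V E t \<longrightarrow> (\<exists>v\<in>V. \<not> g (final_hist D V E t v)))" by blast
  have "g (final_hist D {0} E1 t0 0)" using H[rule_format, OF config1] feas1 by simp
  moreover have "\<exists>v\<in>{0::nat,1}. \<not> g (final_hist D {0,1} E2 t0 v)"
    using H[rule_format, OF config2] infeas2 by simp
  ultimately show False using fh_eq[of D] by auto
qed

end
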